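(* Take maps of event structures $f: A\to C$ and $g: B \to C$, and take their pullback $A\circledast B$. Suppose moreover that in the pullback, we have $[(a, b)]_x \rightarrow [(a', b')]_x$. Then necessarily, $a\rightarrow a'$ in $A$ or $b\rightarrow b'$ in $B$.
   Context: For events $e,e'$ of an event structure, $e \rightarrow e'$ denotes immediate causal dependency: $e<e'$ and no event lies strictly between them. The pullback $A\circledast B$ of $f:A\to C$ and $g:B\to C$ in the category of event structures and (total) maps is constructed as follows: in the product stable family $\mathcal{C}(A)\times\mathcal{C}(B)$, restrict to the set $R$ of pairs $(a,b)$ with $f a = g b$, and take the event structure of primes of the resulting stable family. Its events are primes $[(a,b)]_x$, where $x$ is a configuration of the restricted stable family containing $(a,b)$ and $[(a,b)]_x=\{e\in x\mid e\le_x (a,b)\}$ with $e\le_x e'$ iff every sub-configuration of $x$ containing $e'$ contains $e$; causality is inclusion and a finite set of primes is consistent iff its union is a configuration. *)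

theory Defs
  imports Main
begin

record 'a evstr =
  ev  :: "'a set"
  leq :: "'a \<Rightarrow> 'a \<Rightarrow> bool"
  con :: "'a set set"

definition is_es :: "'a evstr \<Rightarrow> bool" where
  "is_es E \<longleftrightarrow>
     (\<forall>e\<in>ev E. leq E e e) \<and>
     (\<forall>e e'. leq E e e' \<longrightarrow> e \<in> ev E \<and> e' \<in> ev E) \<and>
     (\<forall>e e'. leq E e e' \<and> leq E e' e \<longrightarrow> e = e') \<and>
     (\<forall>e e' e''. leq E e e' \<and> leq E e' e'' \<longrightarrow> leq E e e'') \<and>
     (\<forall>e\<in>ev E. finite {e'. leq E e' e}) \<and>
     (\<forall>X\<in>con E. finite X \<and> X \<subseteq> ev E) \<and>
     (\<forall>e\<in>ev E. {e} \<in> con E) \<and>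
     (\<forall>X Y. Y \<subseteq> X \<and> X \<in> con E \<longrightarrow> Y \<in> con E) \<and>
     (\<forall>X e e'. X \<in> con E \<and> e \<in> X \<and> leq E e' e \<longrightarrow> insert e' X \<in> con E)"

definition conf :: "'a evstr \<Rightarrow> 'a set set" where
  "conf E = {x. finite x \<and> x \<subseteq> ev E \<and> x \<in> con E \<and>
                (\<forall>e\<in>x. \<forall>e'. leq E e' e \<longrightarrow> e' \<in> x)}"

definition es_map :: "'a evstr \<Rightarrow> 'c evstr \<Rightarrow> ('a \<Rightarrow> 'c) \<Rightarrow> bool" where
  "es_map A C f \<longleftrightarrow> (\<forall>x\<in>conf A. f ` x \<in> conf C \<and> inj_on f x)"

definition imm :: "'a evstr \<Rightarrow> 'a \<Rightarrow> 'a \<Rightarrow> bool" where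
  "imm E e e' \<longleftrightarrow> leq E e e' \<and> e \<noteq> e' \<and>
     \<not> (\<exists>e''. leq E e e'' \<and> leq E e'' e' \<and> e'' \<noteq> e \<and> e'' \<noteq> e')"

text \<open>Product stable family \<open>C(A) \<times> C(B)\<close> (for total maps).\<close>
definition prod_fam :: "'a evstr \<Rightarrow> 'b evstr \<Rightarrow> ('a \<times> 'b) set set" where
  "prod_fam A B = {x. finite x \<and> x \<subseteq> ev A \<times> ev B \<and>
       fst ` x \<in> conf A \<and> snd ` x \<in> conf B \<and>
       inj_on fst x \<and> inj_on snd x \<and>
       (\<forall>e\<in>x. \<forall>e'\<in>x. e \<noteq> e' \<longrightarrow>
          (\<exists>y. y \<subseteq> x \<and> fst ` y \<in> conf A \<and> snd ` y \<in> conf B \<and>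
               (e \<in> y \<longleftrightarrow> e' \<notin> y)))}"

definition restr_fam :: "'e set set \<Rightarrow> 'e set \<Rightarrow> 'e set set" where
  "restr_fam F R = {x \<in> F. x \<subseteq> R}"

definition pb_fam :: "'a evstr \<Rightarrow> 'b evstr \<Rightarrow> ('a \<Rightarrow> 'c) \<Rightarrow> ('b \<Rightarrow> 'c) \<Rightarrow> ('a \<times> 'b) set set" where
  "pb_fam A B f g = restr_fam (prod_fam A B) {(a, b). f a = g b}"

definition prime :: "'e set set \<Rightarrow> 'e set \<Rightarrow> 'e \<Rightarrow> 'e set" where
  "prime F x e = {e' \<in> x. \<forall>y\<in>F. y \<subseteq> x \<longrightarrow> e \<in> y \<longrightarrow> e' \<in> y}"

definition primes :: "'e set set \<Rightarrow> 'e set set" where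
  "primes F = {prime F x e | x e. x \<in> F \<and> e \<in> x}"

text \<open>Immediate causality in the event structure of primes (causality = inclusion).\<close>
definition imm_pr :: "'e set set \<Rightarrow> 'e set \<Rightarrow> 'e set \<Rightarrow> bool" where
  "imm_pr F p p' \<longleftrightarrow> p \<in> primes F \<and> p' \<in> primes F \<and> p \<subset> p' \<and>
     \<not> (\<exists>q\<in>primes F. p \<subset> q \<and> q \<subset> p')"

end

theory Submission
  imports Defs
begin

definition good :: "'a evstr \<Rightarrow> 'b evstr \<Rightarrow> ('a\<times>'b) set \<Rightarrow> ('a\<times>'b) set \<Rightarrow> bool" where
  "good A B x y \<longleftrightarrow> y \<subseteq> x \<and> fst ` y \<in> conf A \<and> snd ` y \<in> conf B"

definition DD :: "'a evstr \<Rightarrow> 'b evstr \<Rightarrow> ('a\<times>'b) set \<Rightarrow> ('a\<times>'b) \<Rightarrow> ('a\<times>'b) set" where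
  "DD A B x e = {e' \<in> x. \<forall>y. good A B x y \<and> e \<in> y \<longrightarrow> e' \<in> y}"

lemma conf_sub:
  assumes "is_es A" "X \<in> conf A" "Y \<subseteq> X" "\<forall>e\<in>Y. \<forall>e'. leq A e' e \<longrightarrow> e' \<in> Y"
  shows "Y \<in> conf A"
proof -
  have cd: "\<forall>X Y. Y \<subseteq> X \<and> X \<in> con A \<longrightarrow> Y \<in> con A"
    using assms(1) unfolding is_es_def by blast
  have X: "finite X" "X \<subseteq> ev A" "X \<in> con A" using assms(2) unfolding conf_def by auto
  have "finite Y" using X(1) assms(3) by (rule finite_subset[rotated])
  moreover have "Y \<subseteq> ev A" using X(2) assms(3) by blast
  moreover have "Y \<in> con A" using cd X(3) assms(3) by blast
  ultimately show ?thesis using assms(4) unfolding conf_def by blast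
qed

context
  fixes A :: "'a evstr" and B :: "'b evstr" and x :: "('a\<times>'b) set"
  assumes isA: "is_es A" and isB: "is_es B" and xP: "x \<in> prod_fam A B"
begin

lemma xfin: "finite x" and xsub: "x \<subseteq> ev A \<times> ev B" and xA: "fst ` x \<in> conf A"
  and xB: "snd ` x \<in> conf B" and injA: "inj_on fst x" and injB: "inj_on snd x"
  and xsep: "\<And>e e'. e \<in> x \<Longrightarrow> e' \<in> x \<Longrightarrow> e \<noteq> e' \<Longrightarrow>
          (\<exists>y. y \<subseteq> x \<and> fst ` y \<in> conf A \<and> snd ` y \<in> conf B \<and> (e \<in> y \<longleftrightarrow> e' \<notin> y))"
  using xP unfolding prod_fam_def by auto

lemma x_good: "good A B x x"
  using xA xB unfolding good_def by auto

lemma down_fst: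
  assumes "good A B x y" "w \<in> x" "u \<in> y" "leq A (fst w) (fst u)"
  shows "w \<in> y"
proof -
  have "fst ` y \<in> conf A" "y \<subseteq> x" using assms(1) unfolding good_def by auto
  then have "fst w \<in> fst ` y" using assms(3,4) unfolding conf_def by blast
  then obtain v where "v \<in> y" "fst v = fst w" by auto
  then show ?thesis using \<open>y \<subseteq> x\<close> assms(2) injA by (metis inj_onD subsetD)
qed

lemma down_snd:
  assumes "good A B x y" "w \<in> x" "u \<in> y" "leq B (snd w) (snd u)"
  shows "w \<in> y"
proof -
  have "snd ` y \<in> conf B" "y \<subseteq> x" using assms(1) unfolding good_def by auto
  then have "snd w \<in> snd ` y" using assms(3,4) unfolding conf_def by blast
  then obtain v where "v \<in> y" "snd v = snd w" by auto
  then show ?thesis using \<open>y \<subseteq> x\<close> assms(2) injB by (metis inj_onD subsetD)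
qed

lemma good_intro:
  assumes "y \<subseteq> x"
    and dA: "\<And>u w. u \<in> y \<Longrightarrow> w \<in> x \<Longrightarrow> leq A (fst w) (fst u) \<Longrightarrow> w \<in> y"
    and dB: "\<And>u w. u \<in> y \<Longrightarrow> w \<in> x \<Longrightarrow> leq B (snd w) (snd u) \<Longrightarrow> w \<in> y"
  shows "good A B x y"
proof -
  have "fst ` y \<in> conf A"
  proof (rule conf_sub[OF isA xA])
    show "fst ` y \<subseteq> fst ` x" using assms(1) by auto
    show "\<forall>e\<in>fst ` y. \<forall>e'. leq A e' e \<longrightarrow> e' \<in> fst ` y"
    proof (intro ballI allI impI)
      fix e e' assume "e \<in> fst ` y" "leq A e' e"
      then obtain u where u: "u \<in> y" "e = fst u" by auto
      have "fst u \<in> fst ` x" using u assms(1) by auto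
      then have "e' \<in> fst ` x" using xA \<open>leq A e' e\<close> u unfolding conf_def by blast
      then obtain w where "w \<in> x" "e' = fst w" by auto
      then show "e' \<in> fst ` y" using dA[OF u(1)] \<open>leq A e' e\<close> u by auto
    qed
  qed
  moreover have "snd ` y \<in> conf B"
  proof (rule conf_sub[OF isB xB])
    show "snd ` y \<subseteq> snd ` x" using assms(1) by auto
    show "\<forall>e\<in>snd ` y. \<forall>e'. leq B e' e \<longrightarrow> e' \<in> snd ` y"
    proof (intro ballI allI impI)
      fix e e' assume "e \<in> snd ` y" "leq B e' e"
      then obtain u where u: "u \<in> y" "e = snd u" by auto
      have "snd u \<in> snd ` x" using u assms(1) by auto
      then have "e' \<in> snd ` x" using xB \<open>leq B e' e\<close> u unfolding conf_def by blast
      then obtain w where "w \<in> x" "e' = snd w" by auto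
      then show "e' \<in> snd ` y" using dB[OF u(1)] \<open>leq B e' e\<close> u by auto
    qed
  qed
  ultimately show ?thesis using assms(1) unfolding good_def by auto
qed

lemma DD_sub: "DD A B x e \<subseteq> x" unfolding DD_def by auto

lemma DD_self: "e \<in> x \<Longrightarrow> e \<in> DD A B x e" unfolding DD_def by auto

lemma DD_least: "good A B x y \<Longrightarrow> e \<in> y \<Longrightarrow> DD A B x e \<subseteq> y"
  unfolding DD_def by auto

lemma DD_good: "good A B x (DD A B x e)"
proof (rule good_intro[OF DD_sub])
  fix u w assume "u \<in> DD A B x e" "w \<in> x" "leq A (fst w) (fst u)"
  then show "w \<in> DD A B x e" unfolding DD_def using down_fst by blast
next
  fix u w assume "u \<in> DD A B x e" "w \<in> x" "leq B (snd w) (snd u)"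
  then show "w \<in> DD A B x e" unfolding DD_def using down_snd by blast
qed

lemma good_Int: "good A B x y \<Longrightarrow> good A B x z \<Longrightarrow> good A B x (y \<inter> z)"
  apply (rule good_intro)
  using good_def apply blast
  using down_fst down_snd by blast+

lemma DD_mono: "u \<in> DD A B x e \<Longrightarrow> DD A B x u \<subseteq> DD A B x e"
  unfolding DD_def by auto

lemma DD_inj: assumes "u \<in> x" "v \<in> x" "DD A B x u = DD A B x v" shows "u = v"
proof (rule ccontr)
  assume "u \<noteq> v"
  then obtain y where y: "y \<subseteq> x" "fst ` y \<in> conf A" "snd ` y \<in> conf B" "u \<in> y \<longleftrightarrow> v \<notin> y"
    using xsep assms by blast
  then have g: "good A B x y" unfolding good_def by auto
  show False
  proof (cases "u \<in> y")
    case True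
    then have "v \<in> y" using DD_least[OF g True] DD_self[OF assms(2)] assms(3) by auto
    then show False using y True by auto
  next
    case False
    then have "v \<in> y" using y by auto
    then have "u \<in> y" using DD_least[OF g \<open>v \<in> y\<close>] DD_self[OF assms(1)] assms(3) by auto
    then show False using False by auto
  qed
qed

lemma DD_pred:
  assumes "u \<in> x" "w \<in> x" "leq A (fst w) (fst u) \<or> leq B (snd w) (snd u)"
  shows "w \<in> DD A B x u"
  using assms down_fst down_snd unfolding DD_def by blast

lemma DD_decomp:
  assumes "e' \<in> x"
  shows "DD A B x e' \<subseteq> insert e' (\<Union>{DD A B x w | w. w \<in> x \<and> w \<noteq> e' \<and>
             (leq A (fst w) (fst e') \<or> leq B (snd w) (snd e'))})"
    (is "_ \<subseteq> ?U")
proof (rule DD_least)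
  show "e' \<in> ?U" by simp
  show "good A B x ?U"
  proof (rule good_intro)
    show "?U \<subseteq> x" using assms DD_sub by blast
  next
    fix u w assume u: "u \<in> ?U" and w: "w \<in> x" and l: "leq A (fst w) (fst u)"
    show "w \<in> ?U"
    proof (cases "u = e'")
      case True
      show ?thesis
      proof (cases "w = e'")
        case False
        then show ?thesis using w l True DD_self[OF w] by blast
      qed simp
    next
      case False
      then obtain v where v: "v \<in> x" "v \<noteq> e'" "leq A (fst v) (fst e') \<or> leq B (snd v) (snd e')"
          "u \<in> DD A B x v" using u by blast
      have "w \<in> DD A B x v" using DD_good v(4) w l down_fst by blast
      then show ?thesis using v by blast
    qed
  next
    fix u w assume u: "u \<in> ?U" and w: "w \<in> x" and l: "leq B (snd w) (snd u)"
    show "w \<in> ?U"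
    proof (cases "u = e'")
      case True
      show ?thesis
      proof (cases "w = e'")
        case False
        then show ?thesis using w l True DD_self[OF w] by blast
      qed simp
    next
      case False
      then obtain v where v: "v \<in> x" "v \<noteq> e'" "leq A (fst v) (fst e') \<or> leq B (snd v) (snd e')"
          "u \<in> DD A B x v" using u by blast
      have "w \<in> DD A B x v" using DD_good v(4) w l down_snd by blast
      then show ?thesis using v by blast
    qed
  qed
qed

end

lemma pb_prod: "x \<in> pb_fam A B f g \<Longrightarrow> x \<in> prod_fam A B \<and> x \<subseteq> {(a, b). f a = g b}"
  unfolding pb_fam_def restr_fam_def by auto

lemma DD_in_pb:
  assumes isA: "is_es A" and isB: "is_es B" and xF: "x \<in> pb_fam A B f g"
  shows "DD A B x e \<in> pb_fam A B f g"
proof -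
  have xP: "x \<in> prod_fam A B" and xR: "x \<subseteq> {(a, b). f a = g b}" using pb_prod[OF xF] by auto
  let ?D = "DD A B x e"
  have sub: "?D \<subseteq> x" by (rule DD_sub[OF isA isB xP])
  have g: "good A B x ?D" by (rule DD_good[OF isA isB xP])
  have fin: "finite x" "x \<subseteq> ev A \<times> ev B" "inj_on fst x" "inj_on snd x"
    using xP unfolding prod_fam_def by auto
  have sep: "\<forall>e1\<in>?D. \<forall>e2\<in>?D. e1 \<noteq> e2 \<longrightarrow>
          (\<exists>y. y \<subseteq> ?D \<and> fst ` y \<in> conf A \<and> snd ` y \<in> conf B \<and> (e1 \<in> y \<longleftrightarrow> e2 \<notin> y))"
  proof (intro ballI impI)
    fix e1 e2 assume e12: "e1 \<in> ?D" "e2 \<in> ?D" "e1 \<noteq> e2"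
    have "e1 \<in> x" "e2 \<in> x" using e12 sub by (blast, blast)
    from xsep[OF isA isB xP this e12(3)] obtain y where
      y: "y \<subseteq> x" "fst ` y \<in> conf A" "snd ` y \<in> conf B" "e1 \<in> y \<longleftrightarrow> e2 \<notin> y"
      by blast
    have gy: "good A B x y" unfolding good_def using y by simp
    have "good A B x (y \<inter> ?D)" by (rule good_Int[OF isA isB xP gy g])
    then have "y \<inter> ?D \<subseteq> ?D \<and> fst ` (y \<inter> ?D) \<in> conf A \<and> snd ` (y \<inter> ?D) \<in> conf B \<and>
       (e1 \<in> y \<inter> ?D \<longleftrightarrow> e2 \<notin> y \<inter> ?D)"
      using y(4) e12(1,2) unfolding good_def by simp
    then show "\<exists>y. y \<subseteq> ?D \<and> fst ` y \<in> conf A \<and> snd ` y \<in> conf B \<and> (e1 \<in> y \<longleftrightarrow> e2 \<notin> y)"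
      by (rule exI)
  qed
  have gA: "fst ` ?D \<in> conf A" and gB: "snd ` ?D \<in> conf B" using g unfolding good_def by auto
  have "?D \<in> prod_fam A B"
    unfolding prod_fam_def
    using sub gA gB fin(2) sep finite_subset[OF sub fin(1)] inj_on_subset[OF fin(3) sub]
      inj_on_subset[OF fin(4) sub] by (simp add: subset_trans)
  moreover have "?D \<subseteq> {(a, b). f a = g b}" using sub xR by (rule subset_trans)
  ultimately show ?thesis unfolding pb_fam_def restr_fam_def by simp
qed

lemma prime_DD:
  assumes isA: "is_es A" and isB: "is_es B" and xF: "x \<in> pb_fam A B f g" and e: "e \<in> x"
  shows "prime (pb_fam A B f g) x e = DD A B x e"
proof
  have xP: "x \<in> prod_fam A B" using pb_prod[OF xF] by auto
  show "prime (pb_fam A B f g) x e \<subseteq> DD A B x e"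
    using DD_in_pb[OF isA isB xF, of e] DD_sub[OF isA isB xP] DD_self[OF isA isB xP e] unfolding prime_def by blast
  show "DD A B x e \<subseteq> prime (pb_fam A B f g) x e"
  proof
    fix u assume u: "u \<in> DD A B x e"
    have H: "\<And>y. y \<in> pb_fam A B f g \<Longrightarrow> y \<subseteq> x \<Longrightarrow> e \<in> y \<Longrightarrow> u \<in> y"
    proof -
      fix y assume "y \<in> pb_fam A B f g" "y \<subseteq> x" "e \<in> y"
      then have yP: "y \<in> prod_fam A B" using pb_prod by blast
      then have "fst ` y \<in> conf A" "snd ` y \<in> conf B" unfolding prod_fam_def by auto
      then have "good A B x y" using \<open>y \<subseteq> x\<close> unfolding good_def by simp
      then show "u \<in> y" using u \<open>e \<in> y\<close> unfolding DD_def by blast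
    qed
    have "u \<in> x" using u DD_sub[OF isA isB xP] by blast
    then show "u \<in> prime (pb_fam A B f g) x e" unfolding prime_def using H by simp
  qed
qed

theorem mainTheorem4:
  fixes A :: "'a evstr" and B :: "'b evstr" and C :: "'c evstr"
    and f :: "'a \<Rightarrow> 'c" and g :: "'b \<Rightarrow> 'c"
  assumes "is_es A" and "is_es B" and "is_es C"
    and "es_map A C f" and "es_map B C g"
    and "x \<in> pb_fam A B f g"
    and "(a, b) \<in> x" and "(a', b') \<in> x"
    and "imm_pr (pb_fam A B f g) (prime (pb_fam A B f g) x (a, b))
                                 (prime (pb_fam A B f g) x (a', b'))"
  shows "imm A a a' \<or> imm B b b'"
proof -
  note isA = assms(1) and isB = assms(2) and xF = assms(6)
  have xP: "x \<in> prod_fam A B" using pb_prod[OF xF] by auto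
  let ?F = "pb_fam A B f g"
  let ?D = "DD A B x"
  define e where "e = (a, b)"
  define e' where "e' = (a', b')"
  have ex: "e \<in> x" "e' \<in> x" using assms(7,8) e_def e'_def by auto
  have pe: "prime ?F x e = ?D e" "prime ?F x e' = ?D e'"
    using prime_DD[OF isA isB xF] ex by auto
  have lt: "?D e \<subset> ?D e'" and nobetween: "\<not> (\<exists>q\<in>primes ?F. ?D e \<subset> q \<and> q \<subset> ?D e')"
    using assms(9) pe unfolding imm_pr_def e_def e'_def by auto
  have inprimes: "\<And>w. w \<in> x \<Longrightarrow> ?D w \<in> primes ?F"
    using prime_DD[OF isA isB xF] xF unfolding primes_def by fastforce
  have nb: "\<And>w. w \<in> x \<Longrightarrow> w \<noteq> e \<Longrightarrow> w \<noteq> e' \<Longrightarrow> e \<in> ?D w \<Longrightarrow> w \<in> ?D e' \<Longrightarrow> False"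
  proof -
    fix w assume w: "w \<in> x" "w \<noteq> e" "w \<noteq> e'" "e \<in> ?D w" "w \<in> ?D e'"
    have "?D e \<subseteq> ?D w" "?D w \<subseteq> ?D e'" using DD_mono[OF isA isB xP] w by auto
    moreover have "?D e \<noteq> ?D w" "?D w \<noteq> ?D e'"
      using DD_inj[OF isA isB xP] w ex by metis+
    ultimately show False using nobetween inprimes[OF w(1)] by blast
  qed
  have ee: "e \<noteq> e'" using lt by auto
  have eDe': "e \<in> ?D e'" using lt DD_self[OF isA isB xP ex(1)] by auto
  have step: "leq A a a' \<or> leq B b b'"
  proof -
    obtain w where w: "w \<in> x" "w \<noteq> e'" "leq A (fst w) a' \<or> leq B (snd w) b'" "e \<in> ?D w"
      using DD_decomp[OF isA isB xP ex(2)] eDe' ee unfolding e'_def by auto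
    have "w \<in> ?D e'" using DD_pred[OF isA isB xP ex(2) w(1)] w(3) unfolding e'_def by auto
    then have "w = e" using nb w by blast
    then show ?thesis using w(3) unfolding e_def by auto
  qed
  have x_A: "fst ` x \<in> conf A" and x_B: "snd ` x \<in> conf B" and injA: "inj_on fst x" and injB: "inj_on snd x"
    using xP unfolding prod_fam_def by auto
  show ?thesis
  proof (cases "leq A a a'")
    case True
    have "a \<noteq> a'" using injA ex ee unfolding e_def e'_def by (metis fst_conv inj_onD)
    moreover have "\<not> (\<exists>a''. leq A a a'' \<and> leq A a'' a' \<and> a'' \<noteq> a \<and> a'' \<noteq> a')"
    proof
      assume "\<exists>a''. leq A a a'' \<and> leq A a'' a' \<and> a'' \<noteq> a \<and> a'' \<noteq> a'"
      then obtain a'' where h: "leq A a a''" "leq A a'' a'" "a'' \<noteq> a" "a'' \<noteq> a'" by blast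
      have "a' \<in> fst ` x" using ex unfolding e'_def by force
      then have "a'' \<in> fst ` x" using x_A h(2) unfolding conf_def by blast
      then obtain w where w: "w \<in> x" "fst w = a''" by auto
      have "e \<in> ?D w" using DD_pred[OF isA isB xP w(1) ex(1)] h w unfolding e_def by auto
      moreover have "w \<in> ?D e'" using DD_pred[OF isA isB xP ex(2) w(1)] h w unfolding e'_def by auto
      moreover have "w \<noteq> e" "w \<noteq> e'" using w h unfolding e_def e'_def by auto
      ultimately show False using nb w by blast
    qed
    ultimately show ?thesis using True unfolding imm_def by auto
  next
    case False
    then have L: "leq B b b'" using step by auto
    have "b \<noteq> b'" using injB ex ee unfolding e_def e'_def by (metis snd_conv inj_onD)
    moreover have "\<not> (\<exists>b''. leq B b b'' \<and> leq B b'' b' \<and> b'' \<noteq> b \<and> b'' \<noteq> b')"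
    proof
      assume "\<exists>b''. leq B b b'' \<and> leq B b'' b' \<and> b'' \<noteq> b \<and> b'' \<noteq> b'"
      then obtain b'' where h: "leq B b b''" "leq B b'' b'" "b'' \<noteq> b" "b'' \<noteq> b'" by blast
      have "b' \<in> snd ` x" using ex unfolding e'_def by force
      then have "b'' \<in> snd ` x" using x_B h(2) unfolding conf_def by blast
      then obtain w where w: "w \<in> x" "snd w = b''" by auto
      have "e \<in> ?D w" using DD_pred[OF isA isB xP w(1) ex(1)] h w unfolding e_def by auto
      moreover have "w \<in> ?D e'" using DD_pred[OF isA isB xP ex(2) w(1)] h w unfolding e'_def by auto
      moreover have "w \<noteq> e" "w \<noteq> e'" using w h unfolding e_def e'_def by auto
      ultimately show False using nb w by blast
    qed
    ultimately show ?thesis using L unfolding imm_def by auto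
  qed
qed

end
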